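(* Let $(\Gamma,M)$ be an E-GCM graph which is unital OA-cyclic, with Coxeter group $W$. Then for all $w\in W$, \[ f_1\,\ell(w)\le |N_M(w)|\le f_2\,\ell(w),\] where $f_1$ and $f_2$ are respectively the minimum and the maximum of the integers $f_{\Gamma',M'}$ as $(\Gamma',M')$ ranges over the OA-connected components of $(\Gamma,M)$.
   Context: E-GCM $M=(M_{ij})_{i,j\in I_n}$: real, $M_{ii}=2$, $M_{ij}\le0$ ($i\ne j$), $M_{ij}\ne0\iff M_{ji}\ne0$, nonzero $M_{ij}M_{ji}$ either $\ge4$ or $=4\cos^2(\pi/m)$ with $m\ge3$ integer; nodes $\gamma_i$, adjacent iff $M_{ij}\ne 0$. Coxeter group $W$: generators $s_i$, $s_i^2=e$, $(s_is_j)^{m_{ij}}=e$, with $m_{ij}=k$ if $M_{ij}M_{ji}=4\cos^2(\pi/k)$ ($k\ge2$), $m_{ij}=\infty$ if $M_{ij}M_{ji}\ge4$; $\ell$ = length. $W$ acts on real $V$ with basis $(\alpha_i)$ via $s_i.\alpha_j=\alpha_j-M_{ij}\alpha_i$; $\Phi_M=\{w.\alpha_i\}$; $\Phi_M^+$ ($\Phi_M^-$) = roots with all coefficients $\ge 0$ ($\le0$). $N_M(w):=\{\alpha\in\Phi_M^+: w.\alpha\in\Phi_M^-\}$. Odd-adjacent: $m_{ij}$ odd; then $K_{ji}:=-M_{ji}/(2\cos(\pi/m_{ij}))$. OA-path: sequence of nodes $[\gamma_{i_0},\dots,\gamma_{i_p}]$ with consecutive ones odd-adjacent, $\Pi_{\mathcal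 P}=K_{i_pi_{p-1}}\cdots K_{i_1i_0}$; OA-cycle: $\gamma_{i_p}=\gamma_{i_0}$. $(\Gamma,M)$ is unital OA-cyclic if $\Pi_{\mathcal C}=1$ for every OA-cycle. OA-connected component: induced E-GCM subgraph on a maximal set of nodes pairwise joinable by OA-paths. For an OA-connected component $(\Gamma',M')$ (unital OA-cyclic here), $f_{\Gamma',M'}:=|\{K\alpha_x:K\in\mathbb{R}\}\cap\Phi_M^+|$ for any node $\gamma_x$ of $(\Gamma',M')$; this number is finite and independent of the choice of $x$. *)

theory Defs
  imports Complex_Main "HOL-Library.Extended_Nat"
begin

text \<open>Nodes / indices are the naturals 0..<n. An E-GCM is a function M :: nat => nat => real,
  only its values on {0..<n} x {0..<n} matter.\<close>

definition egcm :: "nat \<Rightarrow> (nat \<Rightarrow> nat \<Rightarrow> real) \<Rightarrow> bool" where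
  "egcm n M \<longleftrightarrow>
     (\<forall>i<n. M i i = 2) \<and>
     (\<forall>i<n. \<forall>j<n. i \<noteq> j \<longrightarrow>
        M i j \<le> 0 \<and> (M i j \<noteq> 0 \<longleftrightarrow> M j i \<noteq> 0) \<and>
        (M i j * M j i \<noteq> 0 \<longrightarrow>
           M i j * M j i \<ge> 4 \<or> (\<exists>m::nat. m \<ge> 3 \<and> M i j * M j i = 4 * (cos (pi / real m))\<^sup>2)))"

definition cox_m :: "(nat \<Rightarrow> nat \<Rightarrow> real) \<Rightarrow> nat \<Rightarrow> nat \<Rightarrow> enat" where
  "cox_m M i j =
     (if i = j then 1
      else if M i j * M j i \<ge> 4 then \<infinity>
      else enat (THE k::nat. k \<ge> 2 \<and> M i j * M j i = 4 * (cos (pi / real k))\<^sup>2))"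

text \<open>Coxeter group W as words over the generators s_0..s_(n-1) modulo the congruence
  generated by the defining relations s_i^2 = e and (s_i s_j)^(m_ij) = e.\<close>
inductive cox_eq :: "nat \<Rightarrow> (nat \<Rightarrow> nat \<Rightarrow> real) \<Rightarrow> nat list \<Rightarrow> nat list \<Rightarrow> bool"
  for n M where
  refl: "cox_eq n M u u"
| sym: "cox_eq n M u v \<Longrightarrow> cox_eq n M v u"
| trans: "cox_eq n M u v \<Longrightarrow> cox_eq n M v w \<Longrightarrow> cox_eq n M u w"
| square: "i < n \<Longrightarrow> cox_eq n M (u @ [i, i] @ v) (u @ v)"
| braid: "i < n \<Longrightarrow> j < n \<Longrightarrow> i \<noteq> j \<Longrightarrow> cox_m M i j = enat k \<Longrightarrow>
            cox_eq n M (u @ concat (replicate k [i, j]) @ v) (u @ v)"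

definition words :: "nat \<Rightarrow> nat list set" where
  "words n = {ws. set ws \<subseteq> {..<n}}"

definition cox_length :: "nat \<Rightarrow> (nat \<Rightarrow> nat \<Rightarrow> real) \<Rightarrow> nat list \<Rightarrow> nat" where
  "cox_length n M ws = (LEAST k. \<exists>vs \<in> words n. length vs = k \<and> cox_eq n M ws vs)"

text \<open>Vectors of V are coefficient functions w.r.t. the basis alpha_0..alpha_(n-1).\<close>
definition simple_root :: "nat \<Rightarrow> nat \<Rightarrow> real" where
  "simple_root i = (\<lambda>k. if k = i then 1 else 0)"

text \<open>s_i.v = v - (sum_j v_j M_ij) alpha_i, so that s_i.alpha_j = alpha_j - M_ij alpha_i.\<close>
definition refl_act :: "nat \<Rightarrow> (nat \<Rightarrow> nat \<Rightarrow> real) \<Rightarrow> nat \<Rightarrow> (nat \<Rightarrow> real) \<Rightarrow> (nat \<Rightarrow> real)" where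
  "refl_act n M i v = (\<lambda>k. v k - (if k = i then (\<Sum>j<n. M i j * v j) else 0))"

text \<open>Action of the word s_(i1) ... s_(ik): first s_(ik), last s_(i1).\<close>
definition word_act :: "nat \<Rightarrow> (nat \<Rightarrow> nat \<Rightarrow> real) \<Rightarrow> nat list \<Rightarrow> (nat \<Rightarrow> real) \<Rightarrow> (nat \<Rightarrow> real)" where
  "word_act n M ws v = foldr (refl_act n M) ws v"

definition roots :: "nat \<Rightarrow> (nat \<Rightarrow> nat \<Rightarrow> real) \<Rightarrow> (nat \<Rightarrow> real) set" where
  "roots n M = {word_act n M ws (simple_root i) | ws i. ws \<in> words n \<and> i < n}"

definition pos_roots :: "nat \<Rightarrow> (nat \<Rightarrow> nat \<Rightarrow> real) \<Rightarrow> (nat \<Rightarrow> real) set" where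
  "pos_roots n M = {a \<in> roots n M. \<forall>k<n. a k \<ge> 0}"

definition neg_roots :: "nat \<Rightarrow> (nat \<Rightarrow> nat \<Rightarrow> real) \<Rightarrow> (nat \<Rightarrow> real) set" where
  "neg_roots n M = {a \<in> roots n M. \<forall>k<n. a k \<le> 0}"

definition inv_set :: "nat \<Rightarrow> (nat \<Rightarrow> nat \<Rightarrow> real) \<Rightarrow> nat list \<Rightarrow> (nat \<Rightarrow> real) set" where
  "inv_set n M ws = {a \<in> pos_roots n M. word_act n M ws a \<in> neg_roots n M}"

definition odd_adj :: "nat \<Rightarrow> (nat \<Rightarrow> nat \<Rightarrow> real) \<Rightarrow> nat \<Rightarrow> nat \<Rightarrow> bool" where
  "odd_adj n M i j \<longleftrightarrow> i < n \<and> j < n \<and> i \<noteq> j \<and> (\<exists>k. cox_m M i j = enat k \<and> odd k)"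

definition K_coef :: "(nat \<Rightarrow> nat \<Rightarrow> real) \<Rightarrow> nat \<Rightarrow> nat \<Rightarrow> real" where
  "K_coef M j i = - M j i / (2 * cos (pi / real (the_enat (cox_m M i j))))"

definition oa_path :: "nat \<Rightarrow> (nat \<Rightarrow> nat \<Rightarrow> real) \<Rightarrow> nat list \<Rightarrow> bool" where
  "oa_path n M p \<longleftrightarrow> p \<noteq> [] \<and> (\<forall>t. Suc t < length p \<longrightarrow> odd_adj n M (p ! t) (p ! Suc t))"

definition path_prod :: "(nat \<Rightarrow> nat \<Rightarrow> real) \<Rightarrow> nat list \<Rightarrow> real" where
  "path_prod M p = (\<Prod>t<length p - 1. K_coef M (p ! Suc t) (p ! t))"

definition oa_cycle :: "nat \<Rightarrow> (nat \<Rightarrow> nat \<Rightarrow> real) \<Rightarrow> nat list \<Rightarrow> bool" where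
  "oa_cycle n M p \<longleftrightarrow> oa_path n M p \<and> last p = hd p"

definition unital_oa_cyclic :: "nat \<Rightarrow> (nat \<Rightarrow> nat \<Rightarrow> real) \<Rightarrow> bool" where
  "unital_oa_cyclic n M \<longleftrightarrow> (\<forall>p. oa_cycle n M p \<longrightarrow> path_prod M p = 1)"

definition oa_joined :: "nat \<Rightarrow> (nat \<Rightarrow> nat \<Rightarrow> real) \<Rightarrow> nat \<Rightarrow> nat \<Rightarrow> bool" where
  "oa_joined n M x y \<longleftrightarrow> (\<exists>p. oa_path n M p \<and> hd p = x \<and> last p = y)"

definition oa_components :: "nat \<Rightarrow> (nat \<Rightarrow> nat \<Rightarrow> real) \<Rightarrow> nat set set" where
  "oa_components n M = {{y. y < n \<and> oa_joined n M x y} | x. x < n}"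

definition f_node :: "nat \<Rightarrow> (nat \<Rightarrow> nat \<Rightarrow> real) \<Rightarrow> nat \<Rightarrow> nat" where
  "f_node n M x = card {a \<in> pos_roots n M. \<exists>K::real. a = (\<lambda>k. K * simple_root x k)}"

definition f_comp :: "nat \<Rightarrow> (nat \<Rightarrow> nat \<Rightarrow> real) \<Rightarrow> nat set \<Rightarrow> nat" where
  "f_comp n M C = f_node n M (SOME x. x \<in> C)"

end

theory Submission
  imports Defs
begin

lemma word_act_Nil[simp]: "word_act n M [] v = v"
  by (simp add: word_act_def)
lemma word_act_Cons[simp]: "word_act n M (i # ws) v = refl_act n M i (word_act n M ws v)"
  by (simp add: word_act_def)
lemma word_act_append: "word_act n M (xs @ ys) v = word_act n M xs (word_act n M ys v)"
  by (simp add: word_act_def)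

lemma refl_act_add: "refl_act n M i (\<lambda>k. u k + w k) = (\<lambda>k. refl_act n M i u k + refl_act n M i w k)"
  by (auto simp: refl_act_def sum.distrib algebra_simps)
lemma refl_act_scale: "refl_act n M i (\<lambda>k. c * u k) = (\<lambda>k. c * refl_act n M i u k)"
  by (auto simp: refl_act_def sum_distrib_left algebra_simps)
lemma word_act_add: "word_act n M ws (\<lambda>k. u k + w k) = (\<lambda>k. word_act n M ws u k + word_act n M ws w k)"
  by (induction ws) (auto simp: refl_act_add)
lemma word_act_scale: "word_act n M ws (\<lambda>k. c * u k) = (\<lambda>k. c * word_act n M ws u k)"
  by (induction ws) (auto simp: refl_act_scale)

lemma refl_act_invol:
  assumes "i < n" "M i i = 2"
  shows "refl_act n M i (refl_act n M i v) = v"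
proof -
  let ?f = "(\<Sum>j<n. M i j * v j)"
  have "(\<Sum>j<n. M i j * (v j - (if j = i then ?f else 0))) = ?f - M i i * ?f"
    using assms(1) by (simp add: right_diff_distrib sum_subtractf if_distrib[of "\<lambda>x. M i _ * x"] sum.delta cong: if_cong)
  then show ?thesis using assms by (auto simp: refl_act_def)
qed


lemma word_act_square:
  assumes "egcm n M" "i < n"
  shows "word_act n M [i, i] = id"
  using assms refl_act_invol[of i n M] by (auto simp: egcm_def)

lemma cox_eq_cong: "cox_eq n M u v \<Longrightarrow> cox_eq n M (x @ u @ y) (x @ v @ y)"
proof (induction rule: cox_eq.induct)
  case (refl u) then show ?case by (rule cox_eq.refl)
next
  case (sym u v) show ?case by (rule cox_eq.sym[OF sym.IH])
next
  case (trans u v w) then show ?case by (metis cox_eq.trans)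
next
  case (square i u v)
  then show ?case using cox_eq.square[of i n M "x @ u" "v @ y"] by simp
next
  case (braid i j k u v)
  then show ?case using cox_eq.braid[of i n j M k "x @ u" "v @ y"] by simp
qed

lemma cox_eq_parity: "cox_eq n M u v \<Longrightarrow> even (length u + length v)"
  by (induction rule: cox_eq.induct) (auto simp: length_concat sum_list_replicate)

lemma cox_eq_sq: "i < n \<Longrightarrow> cox_eq n M (x @ [i, i] @ y) (x @ y)"
  by (rule cox_eq.square)

lemma cox_eq_snoc_sq: "i < n \<Longrightarrow> cox_eq n M x (x @ [i, i])"
  using cox_eq.square[of i n M x "[]"] by (auto intro: cox_eq.sym)

lemma words_append[simp]: "xs @ ys \<in> words n \<longleftrightarrow> xs \<in> words n \<and> ys \<in> words n"
  by (auto simp: words_def)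
lemma words_Cons[simp]: "x # ys \<in> words n \<longleftrightarrow> x < n \<and> ys \<in> words n"
  by (auto simp: words_def)
lemma words_Nil[simp]: "[] \<in> words n"
  by (auto simp: words_def)

lemma len_ex:
  assumes "ws \<in> words n"
  shows "\<exists>vs\<in>words n. length vs = cox_length n M ws \<and> cox_eq n M ws vs"
  unfolding cox_length_def
  by (rule LeastI_ex) (use assms cox_eq.refl in blast)

lemma len_le:
  assumes "vs \<in> words n" "cox_eq n M ws vs"
  shows "cox_length n M ws \<le> length vs"
  unfolding cox_length_def
  by (rule Least_le) (use assms in blast)

lemma len_le_length: "ws \<in> words n \<Longrightarrow> cox_length n M ws \<le> length ws"
  by (rule len_le) (auto intro: cox_eq.refl)

lemma len_cong:
  assumes "cox_eq n M ws vs"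
  shows "cox_length n M ws = cox_length n M vs"
proof -
  have "\<And>u. cox_eq n M ws u \<longleftrightarrow> cox_eq n M vs u"
    using assms by (meson cox_eq.sym cox_eq.trans)
  then show ?thesis unfolding cox_length_def by simp
qed

lemma len_parity:
  assumes "ws \<in> words n"
  shows "even (cox_length n M ws + length ws)"
proof -
  obtain vs where "vs \<in> words n" "length vs = cox_length n M ws" "cox_eq n M ws vs"
    using len_ex[OF assms] by blast
  then show ?thesis using cox_eq_parity[of n M ws vs] by (simp add: add.commute)
qed

lemma len_append_le:
  assumes "x \<in> words n" "y \<in> words n"
  shows "cox_length n M (x @ y) \<le> cox_length n M x + length y"
proof -
  obtain vs where vs: "vs \<in> words n" "length vs = cox_length n M x" "cox_eq n M x vs"
    using len_ex[OF assms(1)] by blast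
  have "cox_eq n M (x @ y) (vs @ y)" using cox_eq_cong[OF vs(3), of "[]" y] by simp
  then show ?thesis using len_le[of "vs @ y" n M "x @ y"] vs assms by simp
qed

lemma len_snoc:
  assumes "ws \<in> words n" "i < n"
  shows "cox_length n M (ws @ [i]) = Suc (cox_length n M ws) \<or>
         Suc (cox_length n M (ws @ [i])) = cox_length n M ws"
proof -
  have a: "cox_length n M (ws @ [i]) \<le> Suc (cox_length n M ws)"
    using len_append_le[of ws n "[i]" M] assms by simp
  have "cox_length n M ws = cox_length n M (ws @ [i] @ [i])"
    using len_cong[OF cox_eq_snoc_sq[OF assms(2), of M ws]] by simp
  also have "\<dots> \<le> Suc (cox_length n M (ws @ [i]))"
    using len_append_le[of "ws @ [i]" n "[i]" M] assms by simp
  finally have b: "cox_length n M ws \<le> Suc (cox_length n M (ws @ [i]))" .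
  have "even (cox_length n M ws + length ws)" "even (cox_length n M (ws@[i]) + Suc (length ws))"
    using len_parity[of ws n M] len_parity[of "ws @ [i]" n M] assms by auto
  moreover have "\<And>a b l::nat. even (b + l) \<Longrightarrow> even (a + Suc l) \<Longrightarrow> a \<le> Suc b \<Longrightarrow> b \<le> Suc a \<Longrightarrow> a = Suc b \<or> Suc a = b"
    by presburger
  ultimately show ?thesis using a b by blast
qed

lemma cox_m_sym: "cox_m M i j = cox_m M j i"
  by (simp add: cox_m_def mult.commute)

lemma pi_div_le: "2 \<le> k \<Longrightarrow> pi / real k \<le> pi / 2"
  by (rule divide_left_mono) auto

lemma cos_pi_div_nonneg: "2 \<le> k \<Longrightarrow> 0 \<le> cos (pi / real k)"
proof -
  assume k: "2 \<le> k"
  have "0 \<le> pi / real k" by simp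
  then show ?thesis using pi_div_le[OF k] by (intro cos_ge_zero) linarith+
qed

lemma cos_sq_inj:
  assumes "2 \<le> k" "2 \<le> k'" "(cos (pi / real k))\<^sup>2 = (cos (pi / real k'))\<^sup>2"
  shows "k = k'"
proof -
  have "cos (pi / real k) = cos (pi / real k')"
    using assms cos_pi_div_nonneg by simp
  moreover have "pi / real k \<le> pi" "pi / real k' \<le> pi"
    using pi_div_le[of k] pi_div_le[of k'] assms pi_gt_zero by linarith+
  ultimately have "pi / real k = pi / real k'"
    using cos_inj_pi[of "pi / real k" "pi / real k'"] by simp
  then show ?thesis using assms by (simp add: field_simps)
qed

lemma cox_m_fin:
  assumes "egcm n M" "i < n" "j < n" "i \<noteq> j" "cox_m M i j = enat m"
  shows "2 \<le> m \<and> M i j * M j i = 4 * (cos (pi / real m))\<^sup>2 \<and> M i j * M j i < 4"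
proof -
  have lt: "M i j * M j i < 4"
    using assms(4,5) by (auto simp: cox_m_def split: if_splits)
  have ex: "\<exists>k. 2 \<le> k \<and> M i j * M j i = 4 * (cos (pi / real k))\<^sup>2"
  proof (cases "M i j * M j i = 0")
    case True then show ?thesis by (intro exI[of _ 2]) auto
  next
    case False
    from assms(1-4) have "M i j * M j i \<noteq> 0 \<longrightarrow> M i j * M j i \<ge> 4 \<or>
        (\<exists>m::nat. m \<ge> 3 \<and> M i j * M j i = 4 * (cos (pi / real m))\<^sup>2)"
      unfolding egcm_def by blast
    with False lt obtain m' :: nat where "m' \<ge> 3" "M i j * M j i = 4 * (cos (pi / real m'))\<^sup>2"
      by auto
    then show ?thesis by (intro exI[of _ m']) auto
  qed
  have ex1: "\<exists>!k. 2 \<le> k \<and> M i j * M j i = 4 * (cos (pi / real k))\<^sup>2"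
  proof -
    from ex obtain k where k: "2 \<le> k" "M i j * M j i = 4 * (cos (pi / real k))\<^sup>2" by blast
    show ?thesis
    proof (rule ex1I[of _ k])
      show "2 \<le> k \<and> M i j * M j i = 4 * (cos (pi / real k))\<^sup>2" using k by blast
    next
      fix k' assume "2 \<le> k' \<and> M i j * M j i = 4 * (cos (pi / real k'))\<^sup>2"
      then show "k' = k" using k cos_sq_inj[of k' k] by auto
    qed
  qed
  have "m = (THE k::nat. k \<ge> 2 \<and> M i j * M j i = 4 * (cos (pi / real k))\<^sup>2)"
    using assms(4,5) lt by (auto simp: cox_m_def split: if_splits)
  then show ?thesis using theI'[OF ex1] lt by simp
qed

lemma cox_m_inf:
  assumes "i \<noteq> j" "cox_m M i j = \<infinity>"
  shows "M i j * M j i \<ge> 4"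
  using assms by (auto simp: cox_m_def split: if_splits)

lemma egcm_diag: "egcm n M \<Longrightarrow> i < n \<Longrightarrow> M i i = 2"
  by (simp add: egcm_def)

lemma egcm_off:
  assumes "egcm n M" "i < n" "j < n" "i \<noteq> j"
  shows "M i j \<le> 0" "M i j = 0 \<longleftrightarrow> M j i = 0"
  using assms unfolding egcm_def by blast+

definition vec :: "nat \<Rightarrow> nat \<Rightarrow> real \<Rightarrow> real \<Rightarrow> nat \<Rightarrow> real" where
  "vec i j x y = (\<lambda>k. x * simple_root i k + y * simple_root j k)"

lemma vec_swap: "vec i j x y = vec j i y x"
  by (auto simp: vec_def)

lemma simple_root_vec: "simple_root i = vec i j 1 0"
  by (auto simp: vec_def)

lemma sum_vec:
  assumes "i < n" "j < n" "i \<noteq> j"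
  shows "(\<Sum>l<n. N l * vec i j x y l) = N i * x + N j * y"
proof -
  have "(\<Sum>l<n. N l * vec i j x y l) = (\<Sum>l<n. (if l = i then N i * x else 0)) + (\<Sum>l<n. (if l = j then N j * y else 0))"
    unfolding vec_def simple_root_def using assms by (subst sum.distrib[symmetric]) (rule sum.cong, auto)
  also have "\<dots> = N i * x + N j * y" using assms by (simp add: sum.delta)
  finally show ?thesis .
qed

lemma refl_act_vec1:
  assumes "egcm n M" "i < n" "j < n" "i \<noteq> j"
  shows "refl_act n M i (vec i j x y) = vec i j (- x - M i j * y) y"
proof -
  have "(\<Sum>l<n. M i l * vec i j x y l) = M i i * x + M i j * y" by (rule sum_vec[OF assms(2-4)])
  then show ?thesis using assms egcm_diag[OF assms(1,2)]
    unfolding refl_act_def by (auto simp: vec_def simple_root_def algebra_simps)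
qed

lemma refl_act_vec2:
  assumes "egcm n M" "i < n" "j < n" "i \<noteq> j"
  shows "refl_act n M j (vec i j x y) = vec i j x (- y - M j i * x)"
  using refl_act_vec1[OF assms(1,3,2) assms(4)[symmetric], of y x] by (simp add: vec_swap)

fun pseq :: "real \<Rightarrow> nat \<Rightarrow> real" where
  "pseq c 0 = 0"
| "pseq c (Suc 0) = 1"
| "pseq c (Suc (Suc k)) = c * pseq c (Suc k) - pseq c k"

definition altw :: "nat \<Rightarrow> nat \<Rightarrow> nat \<Rightarrow> nat list" where
  "altw i j r = map (\<lambda>k. if even (r - k) then i else j) [0..<r]"

lemma altw_0[simp]: "altw i j 0 = []"
  by (simp add: altw_def)

lemma altw_Suc: "altw i j (Suc r) = (if even (Suc r) then i else j) # altw i j r"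
  unfolding altw_def by (simp add: upt_conv_Cons map_Suc_upt[symmetric] del: upt_Suc)

lemma altw_Suc_snoc: "altw i j (Suc r) = altw j i r @ [j]"
  unfolding altw_def by (rule nth_equalityI) (auto simp: nth_append)

lemma length_altw[simp]: "length (altw i j r) = r"
  by (simp add: altw_def)

lemma nth_altw: "k < r \<Longrightarrow> altw i j r ! k = (if even (r - k) then i else j)"
  by (simp add: altw_def)

lemma set_altw: "set (altw i j r) \<subseteq> {i, j}"
  by (auto simp: altw_def)

lemma altw_act:
  assumes "egcm n M" "i < n" "j < n" "i \<noteq> j"
    and ab: "M i j < 0" "M j i < 0"
  defines "c \<equiv> sqrt (M i j * M j i)"
  shows "word_act n M (altw i j (2 * k)) (simple_root i) = vec i j (pseq c (2 * k + 1)) (- M j i / c * pseq c (2 * k))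
       \<and> word_act n M (altw i j (2 * k + 1)) (simple_root i) = vec i j (pseq c (2 * k + 1)) (- M j i / c * pseq c (2 * k + 2))"
proof (induction k)
  case 0
  have c0: "c > 0" using ab unfolding c_def by (simp add: mult_neg_neg)
  show ?case using refl_act_vec2[OF assms(1-4), of 1 0] c0
    by (simp add: altw_Suc simple_root_vec[of i j])
next
  case (Suc k)
  have c0: "c > 0" using ab unfolding c_def by (simp add: mult_neg_neg)
  have cc: "c * c = M i j * M j i" using ab unfolding c_def
    by (simp add: mult_neg_neg less_imp_le)
  have e1: "2 * Suc k = Suc (2 * k + 1)" by simp
  have e2: "2 * Suc k + 1 = Suc (Suc (2 * k + 1))" by simp
  have A: "word_act n M (altw i j (2 * Suc k)) (simple_root i) = vec i j (pseq c (2 * Suc k + 1)) (- M j i / c * pseq c (2 * Suc k))"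
  proof -
    have "word_act n M (altw i j (2 * Suc k)) (simple_root i) =
          refl_act n M i (vec i j (pseq c (2 * k + 1)) (- M j i / c * pseq c (2 * k + 2)))"
      using Suc.IH by (simp only: e1 altw_Suc) simp
    also have "\<dots> = vec i j (pseq c (2 * Suc k + 1)) (- M j i / c * pseq c (2 * Suc k))"
    proof -
      have "- pseq c (2 * k + 1) - M i j * (- M j i / c * pseq c (2 * k + 2)) = pseq c (2 * Suc k + 1)"
      proof -
        have "\<And>p1 P a b::real. c > 0 \<Longrightarrow> c * c = a * b \<Longrightarrow> - p1 - a * (- b / c * P) = c * P - p1"
          by (simp add: field_simps)
        from this[OF c0 cc] have "- pseq c (2 * k + 1) - M i j * (- M j i / c * pseq c (2 * k + 2)) =
              c * pseq c (2 * k + 2) - pseq c (2 * k + 1)" .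
        also have "\<dots> = pseq c (2 * Suc k + 1)"
          by (simp only: e2) (simp add: numeral_eq_Suc)
        finally show ?thesis .
      qed
      then show ?thesis by (simp add: refl_act_vec1[OF assms(1-4)] numeral_eq_Suc)
    qed
    finally show ?thesis .
  qed
  have B: "word_act n M (altw i j (2 * Suc k + 1)) (simple_root i) = vec i j (pseq c (2 * Suc k + 1)) (- M j i / c * pseq c (2 * Suc k + 2))"
  proof -
    have "word_act n M (altw i j (2 * Suc k + 1)) (simple_root i) =
          refl_act n M j (word_act n M (altw i j (2 * Suc k)) (simple_root i))"
      by (simp add: altw_Suc)
    also have "\<dots> = vec i j (pseq c (2 * Suc k + 1)) (- (- M j i / c * pseq c (2 * Suc k)) - M j i * pseq c (2 * Suc k + 1))"
      by (simp only: A refl_act_vec2[OF assms(1-4)])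
    also have "- (- M j i / c * pseq c (2 * Suc k)) - M j i * pseq c (2 * Suc k + 1) = - M j i / c * pseq c (2 * Suc k + 2)"
    proof -
      have "pseq c (2 * Suc k + 2) = c * pseq c (2 * Suc k + 1) - pseq c (2 * Suc k)"
        by (simp add: numeral_eq_Suc)
      then show ?thesis using c0 by (simp add: field_simps)
    qed
    finally show ?thesis .
  qed
  show ?case using A B by blast
qed

lemma pseq_sin:
  assumes "sin t \<noteq> 0"
  shows "pseq (2 * cos t) k = sin (real k * t) / sin t"
proof (induction "2 * cos t" k rule: pseq.induct)
  case 1 then show ?case by simp
next
  case 2 then show ?case using assms by simp
next
  case (3 k)
  have "sin (real (Suc (Suc k)) * t) = 2 * cos t * sin (real (Suc k) * t) - sin (real k * t)"
  proof -
    have a: "real (Suc (Suc k)) * t = real (Suc k) * t + t" by (simp add: algebra_simps)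
    have b: "real k * t = real (Suc k) * t - t" by (simp add: algebra_simps)
    show ?thesis unfolding a b sin_add sin_diff by (simp add: algebra_simps)
  qed
  then show ?case using 3 assms by (simp add: field_simps)
qed

lemma pseq_mono:
  assumes "2 \<le> c"
  shows "0 \<le> pseq c k \<and> pseq c k \<le> pseq c (Suc k)"
proof (induction k)
  case 0 then show ?case by simp
next
  case (Suc k)
  have "pseq c (Suc (Suc k)) = c * pseq c (Suc k) - pseq c k" by simp
  moreover have "c * pseq c (Suc k) \<ge> 2 * pseq c (Suc k)"
    using assms Suc by (intro mult_right_mono) auto
  ultimately show ?case using Suc by auto
qed

locale fin_dih =
  fixes c :: real and m :: nat
  assumes m2: "2 \<le> m" and c_def: "c = 2 * cos (pi / real m)"
begin

lemma sin_pos: "sin (pi / real m) > 0"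
proof -
  have "pi / real m \<le> pi / 2" using pi_div_le[OF m2] .
  moreover have "0 < pi / real m" using m2 by simp
  moreover have "pi / 2 < pi" by simp
  ultimately show ?thesis by (intro sin_gt_zero) linarith+
qed

lemma p_eq: "pseq c k = sin (real k * (pi / real m)) / sin (pi / real m)"
  unfolding c_def using sin_pos by (intro pseq_sin) simp

lemma p_nonneg: "k \<le> m \<Longrightarrow> 0 \<le> pseq c k"
proof -
  assume k: "k \<le> m"
  have "real k * (pi / real m) \<le> pi" using k m2 by (simp add: field_simps)
  then have "0 \<le> sin (real k * (pi / real m))" by (intro sin_ge_zero) auto
  then show ?thesis using sin_pos p_eq by simp
qed

lemma p_m: "pseq c m = 0"
  using m2 by (simp add: p_eq)

lemma p_m1: "pseq c (m - 1) = 1"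
proof -
  have "real (m - 1) * (pi / real m) = pi - pi / real m" using m2 by (simp add: of_nat_diff field_simps)
  then show ?thesis using sin_pos by (simp add: p_eq)
qed

lemma p_2m: "pseq c (2 * m) = 0"
proof -
  have "real (2 * m) * (pi / real m) = 2 * pi" using m2 by (simp add: field_simps)
  then show ?thesis by (simp add: p_eq)
qed

lemma p_2m1: "pseq c (2 * m - 1) = -1"
proof -
  have "real (2 * m - 1) * (pi / real m) = 2 * pi - pi / real m" using m2 by (simp add: of_nat_diff field_simps)
  then show ?thesis using sin_pos by (simp add: p_eq)
qed

lemma p_2m1': "pseq c (2 * m + 1) = 1"
proof -
  have "real (2 * m + 1) * (pi / real m) = pi / real m + 2 * pi" using m2 by (simp add: field_simps)
  then show ?thesis using sin_pos by (simp add: p_eq sin_add)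
qed

end

lemma c_fin:
  assumes "egcm n M" "i < n" "j < n" "i \<noteq> j" "cox_m M i j = enat m"
  shows "sqrt (M i j * M j i) = 2 * cos (pi / real m)" "2 \<le> m"
proof -
  have m: "2 \<le> m" "M i j * M j i = 4 * (cos (pi / real m))\<^sup>2"
    using cox_m_fin[OF assms] by auto
  have "M i j * M j i = (2 * cos (pi / real m))\<^sup>2"
    using m by (simp add: power_mult_distrib)
  then have "sqrt (M i j * M j i) = \<bar>2 * cos (pi / real m)\<bar>"
    by (simp only: real_sqrt_abs)
  also have "\<dots> = 2 * cos (pi / real m)"
    using cos_pi_div_nonneg[OF m(1)] by simp
  finally show "sqrt (M i j * M j i) = 2 * cos (pi / real m)" .
  show "2 \<le> m" by (rule m)
qed

lemma nth_concat_rep: "k < 2 * m \<Longrightarrow> concat (replicate m [a, b]) ! k = (if even k then a else b)"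
proof (induction m arbitrary: k)
  case 0 then show ?case by simp
next
  case (Suc m)
  show ?case
  proof (cases k)
    case 0 then show ?thesis by simp
  next
    case (Suc k')
    show ?thesis
    proof (cases k')
      case 0 then show ?thesis using Suc by simp
    next
      case (Suc k'')
      then show ?thesis using \<open>k = Suc k'\<close> Suc.prems Suc.IH[of k''] by simp
    qed
  qed
qed

lemma length_concat_rep[simp]: "length (concat (replicate m [a, b])) = 2 * m"
  by (induction m) auto

lemma concat_rep_altw: "concat (replicate m [i, j]) = altw i j (2 * m)"
  by (rule nth_equalityI) (auto simp: nth_concat_rep nth_altw)

lemma refl_act_fix: "(\<Sum>l<n. M i l * w l) = 0 \<Longrightarrow> refl_act n M i w = w"
  unfolding refl_act_def by (rule ext) simp

lemma word_act_fix:
  assumes "set ws \<subseteq> {i, j}" "(\<Sum>l<n. M i l * w l) = 0" "(\<Sum>l<n. M j l * w l) = 0"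
  shows "word_act n M ws w = w"
  using assms by (induction ws) (auto simp: refl_act_fix)

lemma word_act_vec: "word_act n M ws (vec i j x y) = (\<lambda>k. x * word_act n M ws (simple_root i) k + y * word_act n M ws (simple_root j) k)"
  unfolding vec_def by (simp add: word_act_add word_act_scale)

lemma refl_act_self:
  assumes "egcm n M" "i < n"
  shows "refl_act n M i (simple_root i) = (\<lambda>k. (-1) * simple_root i k)"
  using egcm_diag[OF assms] assms(2)
  by (auto simp: refl_act_def simple_root_def if_distrib[of "\<lambda>x. M i _ * x"] sum.delta cong: if_cong)

lemma simple_root_vec2: "simple_root j = vec i j 0 1"
  by (auto simp: vec_def)

lemma altw4: "altw i j 4 = [i, j, i, j]"
  by (simp add: altw_def upt_rec)

lemma braid_roots:
  assumes "egcm n M" "i < n" "j < n" "i \<noteq> j" "cox_m M i j = enat m"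
  shows "word_act n M (altw i j (2 * m)) (simple_root i) = simple_root i"
proof (cases "M i j = 0")
  case True
  then have "M j i = 0" using egcm_off[OF assms(1-4)] by simp
  have "4 * (cos (pi / real m))\<^sup>2 = 0" using cox_m_fin[OF assms] True by simp
  then have "cos (pi / real m) = 0" by simp
  moreover have "2 \<le> m" using cox_m_fin[OF assms] by simp
  ultimately have "m = 2" using cos_sq_inj[of m 2] by simp
  then show ?thesis
    using True \<open>M j i = 0\<close>
    by (simp add: altw4 simple_root_vec[of i j] refl_act_vec1[OF assms(1-4)]
        refl_act_vec2[OF assms(1-4)])
next
  case False
  have "M i j \<le> 0" "M j i \<le> 0" "M j i \<noteq> 0" using False egcm_off(1)[OF assms(1-4)] egcm_off(2)[OF assms(1-4)] egcm_off(1)[OF assms(1,3,2) assms(4)[symmetric]]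
    by auto
  then have lt: "M i j < 0" "M j i < 0" using False by auto
  interpret fin_dih "sqrt (M i j * M j i)" m
    using c_fin[OF assms] by unfold_locales auto
  show ?thesis using altw_act[OF assms(1-4) lt, of m] p_2m p_2m1'
    by (simp add: simple_root_vec[of i j, symmetric])
qed

lemma braid_roots2:
  assumes "egcm n M" "i < n" "j < n" "i \<noteq> j" "cox_m M i j = enat m"
  shows "word_act n M (altw i j (2 * m)) (simple_root j) = simple_root j"
proof (cases "M i j = 0")
  case True
  then have "M j i = 0" using egcm_off[OF assms(1-4)] by simp
  have "4 * (cos (pi / real m))\<^sup>2 = 0" using cox_m_fin[OF assms] True by simp
  then have "cos (pi / real m) = 0" by simp
  moreover have "2 \<le> m" using cox_m_fin[OF assms] by simp
  ultimately have "m = 2" using cos_sq_inj[of m 2] by simp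
  then show ?thesis
    using True \<open>M j i = 0\<close>
    by (simp add: altw4 simple_root_vec2[of j i] refl_act_vec1[OF assms(1-4)]
        refl_act_vec2[OF assms(1-4)])
next
  case False
  have "M i j \<le> 0" "M j i \<le> 0" "M j i \<noteq> 0" using False egcm_off(1)[OF assms(1-4)] egcm_off(2)[OF assms(1-4)] egcm_off(1)[OF assms(1,3,2) assms(4)[symmetric]]
    by auto
  then have lt: "M j i < 0" "M i j < 0" using False by auto
  have m2: "2 \<le> m" using cox_m_fin[OF assms] by simp
  have cm: "cox_m M j i = enat m" using assms(5) cox_m_sym by metis
  interpret fin_dih "sqrt (M j i * M i j)" m
    using c_fin[OF assms(1,3,2) assms(4)[symmetric] cm] by unfold_locales auto
  have e: "2 * m = Suc (2 * (m - 1) + 1)" using m2 by simp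
  have e2: "2 * (m - 1) + 1 = 2 * m - 1" "2 * (m - 1) + 2 = 2 * m" using m2 by auto
  have "word_act n M (altw i j (2 * m)) (simple_root j) =
        word_act n M (altw j i (2 * (m - 1) + 1)) (refl_act n M j (simple_root j))"
    by (simp only: e altw_Suc_snoc word_act_append) simp
  also have "\<dots> = (\<lambda>k. (-1) * word_act n M (altw j i (2 * (m - 1) + 1)) (simple_root j) k)"
    by (simp only: refl_act_self[OF assms(1,3)] word_act_scale)
  also have "\<dots> = simple_root j"
  proof -
    have A: "word_act n M (altw j i (2 * (m - 1) + 1)) (simple_root j) =
      vec j i (pseq (sqrt (M j i * M i j)) (2 * (m - 1) + 1)) (- M i j / sqrt (M j i * M i j) * pseq (sqrt (M j i * M i j)) (2 * (m - 1) + 2))"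
      using altw_act[OF assms(1,3,2) assms(4)[symmetric] lt, of "m - 1"] by blast
    have "word_act n M (altw j i (2 * (m - 1) + 1)) (simple_root j) = vec j i (-1) 0"
      using A unfolding e2 p_2m p_2m1 by simp
    then show ?thesis by (auto simp: vec_def simple_root_def)
  qed
  finally show ?thesis .
qed

lemma solve2a:
  fixes a b fi fj :: real
  assumes "4 - a * b \<noteq> 0"
  shows "fi - (2 * ((2 * fi - a * fj) / (4 - a * b)) + a * ((2 * fj - b * fi) / (4 - a * b))) = 0"
proof -
  have "2 * ((2 * fi - a * fj) / (4 - a * b)) + a * ((2 * fj - b * fi) / (4 - a * b))
      = (2 * (2 * fi - a * fj) + a * (2 * fj - b * fi)) / (4 - a * b)"
    by (simp add: add_divide_distrib)
  also have "2 * (2 * fi - a * fj) + a * (2 * fj - b * fi) = fi * (4 - a * b)"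
    by (simp add: algebra_simps)
  finally show ?thesis using assms by simp
qed

lemma solve2b:
  fixes a b fi fj :: real
  assumes "4 - a * b \<noteq> 0"
  shows "fj - (b * ((2 * fi - a * fj) / (4 - a * b)) + 2 * ((2 * fj - b * fi) / (4 - a * b))) = 0"
  using solve2a[of b a fj fi] assms by (simp add: mult.commute add.commute)

lemma braid_id:
  assumes "egcm n M" "i < n" "j < n" "i \<noteq> j" "cox_m M i j = enat m"
  shows "word_act n M (concat (replicate m [i, j])) v = v"
proof -
  let ?W = "altw i j (2 * m)"
  define fi where "fi = (\<Sum>l<n. M i l * v l)"
  define fj where "fj = (\<Sum>l<n. M j l * v l)"
  define D where "D = 4 - M i j * M j i"
  have D: "D > 0" using cox_m_fin[OF assms] by (simp add: D_def)
  define x where "x = (2 * fi - M i j * fj) / D"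
  define y where "y = (2 * fj - M j i * fi) / D"
  define w where "w = (\<lambda>k. v k - vec i j x y k)"
  have Mii: "M i i = 2" "M j j = 2" using egcm_diag[OF assms(1,2)] egcm_diag[OF assms(1,3)] by auto
  have "(\<Sum>l<n. M i l * w l) = fi - (M i i * x + M i j * y)"
    unfolding w_def fi_def by (simp add: right_diff_distrib sum_subtractf sum_vec[OF assms(2-4)])
  also have "\<dots> = 0" using D unfolding x_def y_def D_def Mii by (intro solve2a) simp
  finally have wi: "(\<Sum>l<n. M i l * w l) = 0" .
  have "(\<Sum>l<n. M j l * w l) = fj - (M j i * x + M j j * y)"
    unfolding w_def fj_def by (simp add: right_diff_distrib sum_subtractf sum_vec[OF assms(2-4)])
  also have "\<dots> = 0" using D unfolding x_def y_def D_def Mii by (intro solve2b) simp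
  finally have wj: "(\<Sum>l<n. M j l * w l) = 0" .
  have vw: "v = (\<lambda>k. w k + vec i j x y k)" by (simp add: w_def)
  have "word_act n M ?W v = (\<lambda>k. word_act n M ?W w k + word_act n M ?W (vec i j x y) k)"
    by (subst vw) (rule word_act_add)
  also have "\<dots> = (\<lambda>k. w k + vec i j x y k)"
    using word_act_fix[OF set_altw wi wj] braid_roots[OF assms] braid_roots2[OF assms]
    by (simp only: word_act_vec) (simp add: vec_def)
  finally show ?thesis using vw concat_rep_altw by simp
qed

lemma cox_eq_act:
  assumes "egcm n M"
  shows "cox_eq n M u v \<Longrightarrow> word_act n M u = word_act n M v"
proof (induction rule: cox_eq.induct)
  case (square i u v)
  show ?case
  proof (rule ext)
    fix x
    have "word_act n M (u @ [i, i] @ v) x = word_act n M u (word_act n M [i, i] (word_act n M v x))"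
      by (simp only: word_act_append)
    also have "\<dots> = word_act n M (u @ v) x"
      using word_act_square[OF assms square(1)] by (simp only: word_act_append id_apply)
    finally show "word_act n M (u @ [i, i] @ v) x = word_act n M (u @ v) x" .
  qed
next
  case (braid i j k u v)
  show ?case
  proof (rule ext)
    fix x
    have "word_act n M (u @ concat (replicate k [i, j]) @ v) x =
          word_act n M u (word_act n M (concat (replicate k [i, j])) (word_act n M v x))"
      by (simp only: word_act_append)
    also have "\<dots> = word_act n M (u @ v) x"
      using braid_id[OF assms braid(1-4)] by (simp only: word_act_append)
    finally show "word_act n M (u @ concat (replicate k [i, j]) @ v) x = word_act n M (u @ v) x" .
  qed
qed auto

definition altern :: "nat list \<Rightarrow> bool" where
  "altern u \<longleftrightarrow> (\<forall>k. Suc k < length u \<longrightarrow> u ! k \<noteq> u ! Suc k)"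

lemma split_two:
  assumes "Suc k < length u"
  shows "u = take k u @ [u ! k, u ! Suc k] @ drop (Suc (Suc k)) u"
proof -
  have "drop k u = u ! k # u ! Suc k # drop (Suc (Suc k)) u"
    using assms by (metis Cons_nth_drop_Suc Suc_lessD)
  then show ?thesis by (metis append_Cons append_Nil append_take_drop_id)
qed

lemma reduced_altern:
  assumes "set u \<subseteq> {i, j}" "i < n" "j < n"
    and R: "\<forall>u'. set u' \<subseteq> {i, j} \<longrightarrow> length u' < length u \<longrightarrow> \<not> cox_eq n M u u'"
  shows "altern u"
  unfolding altern_def
proof (intro allI impI notI)
  fix k assume k: "Suc k < length u" and eq: "u ! k = u ! Suc k"
  let ?u' = "take k u @ drop (Suc (Suc k)) u"
  have "u ! k \<in> set u" using k by simp
  then have xn: "u ! k < n" using assms by auto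
  have "cox_eq n M u ?u'"
    using split_two[OF k] cox_eq.square[OF xn, of M "take k u" "drop (Suc (Suc k)) u"] eq by simp
  moreover have "set ?u' \<subseteq> {i, j}" using assms(1) set_take_subset set_drop_subset by fastforce
  moreover have "length ?u' < length u" using k by simp
  ultimately show False using R by blast
qed

lemma altern_snoc: "altern u \<Longrightarrow> u \<noteq> [] \<Longrightarrow> last u \<noteq> x \<Longrightarrow> altern (u @ [x])"
  unfolding altern_def
  by (auto simp: nth_append last_conv_nth less_Suc_eq) (metis One_nat_def diff_Suc_1)

lemma altern_fwd:
  assumes "altern u" "set u \<subseteq> {a, b}" "a \<noteq> b" "u \<noteq> []" "hd u = a"
  shows "k < length u \<Longrightarrow> u ! k = (if even k then a else b)"
proof (induction k)
  case 0 then show ?case using assms by (simp add: hd_conv_nth)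
next
  case (Suc k)
  have "u ! Suc k \<in> {a, b}" using Suc.prems assms(2) nth_mem by blast
  moreover have "u ! Suc k \<noteq> u ! k" using assms(1) Suc.prems unfolding altern_def by metis
  ultimately show ?case using Suc assms(3) by auto
qed

lemma altern_bwd:
  assumes "altern u" "set u \<subseteq> {a, b}" "a \<noteq> b" "u \<noteq> []" "last u = b"
  shows "u = altw a b (length u)"
proof -
  have *: "d < length u \<Longrightarrow> u ! (length u - Suc d) = (if even d then b else a)" for d
  proof (induction d)
    case 0 then show ?case using assms by (simp add: last_conv_nth)
  next
    case (Suc d)
    have "u ! (length u - Suc (Suc d)) \<in> {a, b}" using Suc.prems assms(2) nth_mem
      by (metis diff_less less_trans subsetD zero_less_Suc length_greater_0_conv assms(4))
    moreover have "u ! (length u - Suc (Suc d)) \<noteq> u ! Suc (length u - Suc (Suc d))"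
      using assms(1) Suc.prems unfolding altern_def by (metis Suc_diff_Suc diff_less length_greater_0_conv assms(4) zero_less_Suc)
    moreover have "Suc (length u - Suc (Suc d)) = length u - Suc d" using Suc.prems by simp
    ultimately show ?case using Suc assms(3) by auto
  qed
  show ?thesis
  proof (rule nth_equalityI)
    fix k assume k: "k < length u"
    have "u ! (length u - Suc (length u - Suc k)) = (if even (length u - Suc k) then b else a)"
      using *[of "length u - Suc k"] k by simp
    moreover have "length u - Suc (length u - Suc k) = k" using k by simp
    moreover have "even (length u - Suc k) \<longleftrightarrow> \<not> even (length u - k)" using k
      by (metis Suc_diff_Suc even_Suc)
    ultimately show "u ! k = altw a b (length u) ! k" using k by (simp add: nth_altw)
  qed simp
qed

lemma cox_eq_rev_cancel: "set D \<subseteq> {..<n} \<Longrightarrow> cox_eq n M (D @ rev D) []"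
proof (induction D)
  case Nil then show ?case by (simp add: cox_eq.refl)
next
  case (Cons d D)
  have "cox_eq n M ([d] @ (D @ rev D) @ [d]) ([d] @ [] @ [d])"
    using cox_eq_cong[OF Cons.IH, where x="[d]" and y="[d]"] Cons.prems by simp
  moreover have "cox_eq n M ([d] @ [] @ [d]) []" using cox_eq.square[of d n M "[]" "[]"] Cons.prems by simp
  ultimately have "cox_eq n M ([d] @ (D @ rev D) @ [d]) []" by (rule cox_eq.trans)
  then show ?case by simp
qed

lemma set_concat_rep: "set (concat (replicate m [a, b])) \<subseteq> {a, b}"
  by (induction m) auto

lemma shorten:
  assumes "egcm n M" "a < n" "b < n" "a \<noteq> b" "cox_m M a b = enat m"
    and y: "altern y" "set y \<subseteq> {a, b}" "m + 1 \<le> length y"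
  shows "\<exists>y'. set y' \<subseteq> {a, b} \<and> Suc (length y') < length y \<and> cox_eq n M y y'"
proof -
  have m2: "2 \<le> m" using cox_m_fin[OF assms(1-5)] by simp
  have ne: "y \<noteq> []" using y by auto
  define x where "x = hd y"
  define x' where "x' = (if x = a then b else a)"
  have xs: "x \<in> {a, b}" using ne y(2) unfolding x_def by (meson hd_in_set subsetD)
  have xx': "{x, x'} = {a, b}" "x \<noteq> x'" using xs assms(4) by (auto simp: x'_def)
  have cm: "cox_m M x x' = enat m" using xs assms(5) cox_m_sym[of M a b] by (auto simp: x'_def)
  have xn: "x < n" "x' < n" using xs assms(2,3) by (auto simp: x'_def)
  define Z where "Z = concat (replicate m [x, x'])"
  define D where "D = drop (m + 1) Z"
  have yk: "k < length y \<Longrightarrow> y ! k = (if even k then x else x')" for k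
  proof -
    have sy: "set y \<subseteq> {x, x'}" using y(2) xx'(1) by simp
    show "k < length y \<Longrightarrow> y ! k = (if even k then x else x')"
      using altern_fwd[OF y(1) sy xx'(2) ne x_def[symmetric]] by blast
  qed
  have tk: "take (m + 1) y = take (m + 1) Z"
    by (rule nth_equalityI) (use y(3) m2 in \<open>auto simp: Z_def yk nth_concat_rep\<close>)
  have Zs: "set Z \<subseteq> {..<n}" using xn by (auto simp: Z_def)
  have Ds: "set D \<subseteq> {..<n}" unfolding D_def using Zs set_drop_subset[of "m + 1" Z] by (rule order_trans[rotated])
  have c0: "cox_eq n M (take (m + 1) Z @ D @ rev D) (take (m + 1) Z)"
    using cox_eq_cong[OF cox_eq_rev_cancel[OF Ds], of M "take (m + 1) Z" "[]"] by simp
  have e: "take (m + 1) Z @ D @ rev D = Z @ rev D" by (simp add: D_def)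
  have c2: "cox_eq n M (Z @ rev D) (rev D)"
    using cox_eq.braid[OF xn xx'(2) cm, of "[]" "rev D"] by (simp add: Z_def)
  have c1: "cox_eq n M (take (m + 1) y) (rev D)"
    using cox_eq.trans[OF cox_eq.sym[OF c0] c2[folded e]] tk by simp
  let ?y' = "rev D @ drop (m + 1) y"
  have "cox_eq n M (take (m + 1) y @ drop (m + 1) y) (rev D @ drop (m + 1) y)"
    using cox_eq_cong[OF c1, of "[]" "drop (m + 1) y"] by simp
  then have "cox_eq n M y ?y'" by simp
  moreover have "Suc (length ?y') < length y" using y(3) m2 by (simp add: D_def Z_def)
  moreover have "set ?y' \<subseteq> {a, b}"
  proof -
    have "set Z \<subseteq> {a, b}" using set_concat_rep[of m x x'] xx'(1) unfolding Z_def by simp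
    then have "set D \<subseteq> {a, b}" unfolding D_def using set_drop_subset[of "m + 1" Z] by (rule order_trans[rotated])
    moreover have "set (drop (m + 1) y) \<subseteq> {a, b}" using y(2) set_drop_subset[of "m + 1" y] by (rule order_trans[rotated])
    ultimately show ?thesis by simp
  qed
  ultimately show ?thesis by blast
qed

lemma m2_of_zero:
  assumes "egcm n M" "i < n" "j < n" "i \<noteq> j" "cox_m M i j = enat m" "M i j = 0"
  shows "m = 2"
proof -
  have "4 * (cos (pi / real m))\<^sup>2 = 0" using cox_m_fin[OF assms(1-5)] assms(6) by simp
  then have "cos (pi / real m) = 0" by simp
  moreover have "2 \<le> m" using cox_m_fin[OF assms(1-5)] by simp
  ultimately show "m = 2" using cos_sq_inj[of m 2] by simp
qed

lemma neg_of_nz: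
  assumes "egcm n M" "i < n" "j < n" "i \<noteq> j" "M i j \<noteq> 0"
  shows "M i j < 0" "M j i < 0"
proof -
  have "M i j \<le> 0" "M j i \<le> 0" "M j i \<noteq> 0" using assms(5) egcm_off(1)[OF assms(1-4)] egcm_off(2)[OF assms(1-4)] egcm_off(1)[OF assms(1,3,2) assms(4)[symmetric]]
    by auto
  then show "M i j < 0" "M j i < 0" using assms(5) by auto
qed

lemma altw_nonneg:
  assumes "egcm n M" "i < n" "j < n" "i \<noteq> j" and lt: "M i j < 0" "M j i < 0"
    and pos: "\<forall>k \<le> r + 1. 0 \<le> pseq (sqrt (M i j * M j i)) k"
  shows "\<exists>x y. 0 \<le> x \<and> 0 \<le> y \<and> word_act n M (altw i j r) (simple_root i) = vec i j x y"
proof -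
  let ?c = "sqrt (M i j * M j i)"
  have c0: "?c > 0" using lt by (simp add: mult_neg_neg)
  have q: "0 \<le> - M j i / ?c" using lt c0 by (simp add: divide_nonpos_pos less_imp_le)
  obtain k where "r = 2 * k \<or> r = 2 * k + 1" by (metis dvd_mult_div_cancel odd_two_times_div_two_succ)
  then show ?thesis
  proof
    assume r: "r = 2 * k"
    have e: "word_act n M (altw i j r) (simple_root i) = vec i j (pseq ?c (2 * k + 1)) (- M j i / ?c * pseq ?c (2 * k))"
      using altw_act[OF assms(1-4) lt, of k] r by simp
    moreover have "0 \<le> pseq ?c (2 * k + 1)" using spec[OF pos, of "2 * k + 1"] r by (simp del: pseq.simps)
    moreover have "0 \<le> - M j i / ?c * pseq ?c (2 * k)" by (intro mult_nonneg_nonneg q) (use spec[OF pos, of "2 * k"] r in \<open>simp del: pseq.simps\<close>)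
    ultimately show ?thesis by blast
  next
    assume r: "r = 2 * k + 1"
    have e: "word_act n M (altw i j r) (simple_root i) = vec i j (pseq ?c (2 * k + 1)) (- M j i / ?c * pseq ?c (2 * k + 2))"
      using altw_act[OF assms(1-4) lt, of k] r by simp
    moreover have "0 \<le> pseq ?c (2 * k + 1)" using spec[OF pos, of "2 * k + 1"] r by (simp del: pseq.simps)
    moreover have "0 \<le> - M j i / ?c * pseq ?c (2 * k + 2)" by (intro mult_nonneg_nonneg q) (use spec[OF pos, of "2 * k + 2"] r in \<open>simp del: pseq.simps\<close>)
    ultimately show ?thesis by blast
  qed
qed

lemma dih_pos:
  assumes "egcm n M" "i < n" "j < n" "i \<noteq> j" "set u \<subseteq> {i, j}"
    and R1: "\<forall>u'. set u' \<subseteq> {i, j} \<longrightarrow> length u' < length u \<longrightarrow> \<not> cox_eq n M u u'"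
    and R2: "\<forall>u'. set u' \<subseteq> {i, j} \<longrightarrow> length u' < length u \<longrightarrow> \<not> cox_eq n M (u @ [i]) u'"
  shows "\<exists>x y. 0 \<le> x \<and> 0 \<le> y \<and> word_act n M u (simple_root i) = vec i j x y"
proof (cases "u = []")
  case True
  then show ?thesis by (intro exI[of _ 1] exI[of _ 0]) (simp add: simple_root_vec[of i j])
next
  case False
  have alt: "altern u" using reduced_altern[OF assms(5,2,3) R1] .
  have lastj: "last u = j"
  proof (rule ccontr)
    assume "last u \<noteq> j"
    moreover have "last u \<in> {i, j}" using False assms(5) last_in_set by blast
    ultimately have li: "last u = i" by simp
    have eq: "u @ [i] = butlast u @ [i, i] @ []"
    proof -
      have "u = butlast u @ [last u]" using append_butlast_last_id[OF False] by simp
      then show ?thesis using li by (metis append_Cons append_Nil append_assoc append.right_neutral)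
    qed
    have "cox_eq n M (u @ [i]) (butlast u @ [])" unfolding eq by (rule cox_eq.square[OF assms(2)])
    moreover have "set (butlast u) \<subseteq> {i, j}" using assms(5) by (meson in_set_butlastD subset_iff)
    moreover have "length (butlast u) < length u" using False by simp
    ultimately show False using R2 by auto
  qed
  define r where "r = length u"
  have u: "u = altw i j r" unfolding r_def by (rule altern_bwd[OF alt assms(5,4) False lastj])
  have r1: "1 \<le> r" using False by (simp add: r_def Suc_le_eq)
  show ?thesis
  proof (cases "r = 1")
    case True
    have "word_act n M u (simple_root i) = vec i j 1 (- M j i)"
      using True u by (simp add: altw_Suc simple_root_vec[of i j] refl_act_vec2[OF assms(1-4)])
    moreover have "0 \<le> - M j i" using egcm_off(1)[OF assms(1,3,2) assms(4)[symmetric]] by simp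
    ultimately show ?thesis by (intro exI[of _ 1] exI[of _ "- M j i"]) simp
  next
    case False
    then have r2: "2 \<le> r" using r1 by simp
    have "M i j \<noteq> 0 \<and> (\<forall>k \<le> r + 1. 0 \<le> pseq (sqrt (M i j * M j i)) k)"
    proof (cases "cox_m M i j")
      case (enat m)
      have "r < m"
      proof (rule ccontr)
        assume "\<not> r < m"
        then have "m + 1 \<le> length (u @ [i])" by (simp add: r_def)
        moreover have "altern (u @ [i])" using altern_snoc[OF alt \<open>u \<noteq> []\<close>] lastj assms(4) by simp
        moreover have "set (u @ [i]) \<subseteq> {i, j}" using assms(5) by simp
        ultimately obtain y' where "set y' \<subseteq> {i, j}" "Suc (length y') < length (u @ [i])" "cox_eq n M (u @ [i]) y'"
          using shorten[OF assms(1-4) enat] by blast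
        then show False using R2 by auto
      qed
      then have mz: "M i j \<noteq> 0" using m2_of_zero[OF assms(1-4) enat] r2 by auto
      interpret fin_dih "sqrt (M i j * M j i)" m
        using c_fin[OF assms(1-4) enat] by unfold_locales auto
      show ?thesis using mz p_nonneg \<open>r < m\<close> by auto
    next
      case infinity
      have P: "M i j * M j i \<ge> 4" using cox_m_inf[OF assms(4) infinity] .
      then have mz: "M i j \<noteq> 0" by auto
      have "sqrt (M i j * M j i) \<ge> 2" using P real_sqrt_le_mono[OF P] by simp
      then show ?thesis using mz pseq_mono by blast
    qed
    then show ?thesis using altw_nonneg[OF assms(1-4) neg_of_nz[OF assms(1-4)], of r] u by auto
  qed
qed

definition nonneg :: "nat \<Rightarrow> (nat \<Rightarrow> real) \<Rightarrow> bool" where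
  "nonneg n v \<longleftrightarrow> (\<forall>k<n. 0 \<le> v k)"

lemma words_ij: "set u \<subseteq> {i, j} \<Longrightarrow> i < n \<Longrightarrow> j < n \<Longrightarrow> u \<in> words n"
  by (auto simp: words_def)

lemma key_lemma:
  assumes E: "egcm n M"
  shows "\<forall>ws. ws \<in> words n \<longrightarrow> cox_length n M ws = L \<longrightarrow>
          (\<forall>i<n. L < cox_length n M (ws @ [i]) \<longrightarrow> nonneg n (word_act n M ws (simple_root i)))"
proof (induction L rule: less_induct)
  case (less L)
  show ?case
  proof (intro allI impI)
    fix ws i
    assume ws: "ws \<in> words n" and lw: "cox_length n M ws = L" and i: "i < n"
      and gt: "L < cox_length n M (ws @ [i])"
    obtain rs where rs: "rs \<in> words n" "length rs = L" "cox_eq n M ws rs"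
      using len_ex[OF ws, of M] lw by auto
    have act: "word_act n M ws = word_act n M rs" using cox_eq_act[OF E rs(3)] .
    have "cox_eq n M (ws @ [i]) (rs @ [i])" using cox_eq_cong[OF rs(3), of "[]" "[i]"] by simp
    then have gt': "L < cox_length n M (rs @ [i])" using gt len_cong by metis
    have lrs: "cox_length n M rs = L" using len_cong[OF rs(3)] lw by simp
    show "nonneg n (word_act n M ws (simple_root i))"
    proof (cases "rs = []")
      case True
      then show ?thesis unfolding act by (simp add: nonneg_def simple_root_def)
    next
      case False
      then obtain w' j where rsj: "rs = w' @ [j]" by (metis rev_exhaust)
      have w': "w' \<in> words n" "j < n" using rs(1) rsj by auto
      have L1: "1 \<le> L" using rs(2) rsj by simp
      have lw': "cox_length n M w' = L - 1"
      proof -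
        have "cox_length n M w' \<le> L - 1" using len_le_length[OF w'(1), of M] rs(2) rsj by simp
        moreover have "L \<le> cox_length n M w' + 1"
          using len_append_le[of w' n "[j]" M] w' lrs rsj by simp
        ultimately show ?thesis by simp
      qed
      have ji: "j \<noteq> i"
      proof
        assume "j = i"
        then have "cox_eq n M (rs @ [i]) w'"
          using cox_eq.square[OF i, of M w' "[]"] rsj by simp
        then have "cox_length n M (rs @ [i]) = L - 1" using len_cong lw' by metis
        then show False using gt' by simp
      qed
      define Q where "Q = (\<lambda>(v, u). v \<in> words n \<and> set u \<subseteq> {i, j} \<and> cox_eq n M rs (v @ u) \<and>
                              cox_length n M v + length u = L)"
      have Q0: "Q (w', [j])" unfolding Q_def using w' lw' L1 rsj cox_eq.refl by auto
      obtain p where Qp: "Q p" and pmin: "\<And>q. Q q \<Longrightarrow> cox_length n M (fst p) \<le> cox_length n M (fst q)"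
        using ex_has_least_nat[of Q "(w', [j])" "\<lambda>p. cox_length n M (fst p)"] Q0 by blast
      obtain v u where p: "p = (v, u)" by (cases p)
      have v: "v \<in> words n" "set u \<subseteq> {i, j}" "cox_eq n M rs (v @ u)" "cox_length n M v + length u = L"
        using Qp p unfolding Q_def by auto
      have uw: "u \<in> words n" using words_ij[OF v(2) i w'(2)] .
      have vlt: "cox_length n M v < L" using pmin[OF Q0] p lw' L1 by simp
      have grow: "cox_length n M v < cox_length n M (v @ [t])" if t: "t \<in> {i, j}" for t
      proof (rule ccontr)
        assume nlt: "\<not> cox_length n M v < cox_length n M (v @ [t])"
        have tn: "t < n" using t i w'(2) by auto
        then have sh: "Suc (cox_length n M (v @ [t])) = cox_length n M v"
          using len_snoc[OF v(1) tn, of M] nlt by auto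
        have "cox_eq n M (v @ [t, t] @ u) (v @ u)" by (rule cox_eq.square[OF tn])
        then have "cox_eq n M rs ((v @ [t]) @ (t # u))"
          using v(3) by (metis append_Cons append_Nil append_assoc cox_eq.sym cox_eq.trans)
        then have "Q (v @ [t], t # u)" unfolding Q_def using v tn t sh by auto
        from pmin[OF this] p sh show False by simp
      qed
      have IH: "nonneg n (word_act n M v (simple_root t))" if t: "t \<in> {i, j}" for t
      proof -
        have tn: "t < n" using t i w'(2) by auto
        show ?thesis using less[OF vlt] v(1) grow[OF t] tn by blast
      qed
      have R1: "\<forall>u'. set u' \<subseteq> {i, j} \<longrightarrow> length u' < length u \<longrightarrow> \<not> cox_eq n M u u'"
      proof (intro allI impI notI)
        fix u' assume u': "set u' \<subseteq> {i, j}" "length u' < length u" "cox_eq n M u u'"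
        have "cox_eq n M (v @ u @ []) (v @ u' @ [])" by (rule cox_eq_cong[OF u'(3)])
        then have "cox_eq n M rs (v @ u')" using v(3) cox_eq.trans by simp
        then have "cox_length n M rs \<le> cox_length n M v + length u'"
          using len_cong len_append_le[OF v(1) words_ij[OF u'(1) i w'(2)], of M] by metis
        then show False using lrs v(4) u'(2) by simp
      qed
      have R2: "\<forall>u'. set u' \<subseteq> {i, j} \<longrightarrow> length u' < length u \<longrightarrow> \<not> cox_eq n M (u @ [i]) u'"
      proof (intro allI impI notI)
        fix u' assume u': "set u' \<subseteq> {i, j}" "length u' < length u" "cox_eq n M (u @ [i]) u'"
        have "cox_eq n M (rs @ [i]) (v @ u @ [i])" using cox_eq_cong[OF v(3), of "[]" "[i]"] by simp
        moreover have "cox_eq n M (v @ (u @ [i]) @ []) (v @ u' @ [])" by (rule cox_eq_cong[OF u'(3)])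
        ultimately have "cox_eq n M (rs @ [i]) (v @ u')" using cox_eq.trans by simp
        then have "cox_length n M (rs @ [i]) \<le> cox_length n M v + length u'"
          using len_cong len_append_le[OF v(1) words_ij[OF u'(1) i w'(2)], of M] by metis
        then show False using gt' v(4) u'(2) by simp
      qed
      obtain x y where xy: "0 \<le> x" "0 \<le> y" "word_act n M u (simple_root i) = vec i j x y"
        using dih_pos[OF E i w'(2) ji[symmetric] v(2) R1 R2] by blast
      have "word_act n M rs (simple_root i) = word_act n M (v @ u) (simple_root i)"
        using cox_eq_act[OF E v(3)] by simp
      also have "\<dots> = (\<lambda>k. x * word_act n M v (simple_root i) k + y * word_act n M v (simple_root j) k)"
        by (simp add: word_act_append xy(3) word_act_vec)
      finally show ?thesis unfolding act using IH[of i] IH[of j] xy(1,2)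
        by (simp add: nonneg_def)
    qed
  qed
qed

lemma pos_lemma:
  assumes "egcm n M" "ws \<in> words n" "i < n" "cox_length n M ws < cox_length n M (ws @ [i])"
  shows "nonneg n (word_act n M ws (simple_root i))"
  using key_lemma[OF assms(1), of "cox_length n M ws"] assms by blast

lemma word_act_rev:
  assumes "egcm n M" "ws \<in> words n"
  shows "word_act n M (rev ws) (word_act n M ws v) = v"
  using assms(2)
proof (induction ws arbitrary: v)
  case Nil then show ?case by simp
next
  case (Cons i ws)
  have i: "i < n" "ws \<in> words n" using Cons.prems by auto
  have "word_act n M (rev (i # ws)) (word_act n M (i # ws) v) =
        word_act n M (rev ws) (refl_act n M i (refl_act n M i (word_act n M ws v)))"
    by (simp add: word_act_append)
  also have "\<dots> = v" using refl_act_invol[of i n M "word_act n M ws v", OF i(1) egcm_diag[OF assms(1) i(1)]] Cons.IH[OF i(2)] by simp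
  finally show ?case .
qed

lemma word_act_support:
  assumes "ws \<in> words n" "\<forall>k\<ge>n. v k = 0"
  shows "\<forall>k\<ge>n. word_act n M ws v k = 0"
  using assms by (induction ws) (auto simp: refl_act_def)

lemma word_act_zero: "word_act n M ws (\<lambda>k. 0) = (\<lambda>k. 0)"
  using word_act_scale[of n M ws 0 "\<lambda>k. 0"] by simp

definition Pset :: "nat \<Rightarrow> (nat \<Rightarrow> nat \<Rightarrow> real) \<Rightarrow> nat \<Rightarrow> (nat \<Rightarrow> real) set" where
  "Pset n M x = {a \<in> pos_roots n M. \<exists>K::real. a = (\<lambda>k. K * simple_root x k)}"

lemma f_node_Pset: "f_node n M x = card (Pset n M x)"
  by (simp add: f_node_def Pset_def)

context
  fixes n M
  assumes E: "egcm n M"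
begin

lemma root_support: "a \<in> roots n M \<Longrightarrow> \<forall>k\<ge>n. a k = 0"
  unfolding roots_def
  by (auto intro!: word_act_support[rule_format] simp: simple_root_def)

lemma root_nz: "a \<in> roots n M \<Longrightarrow> \<exists>k<n. a k \<noteq> 0"
proof (rule ccontr)
  assume a: "a \<in> roots n M" and "\<not> (\<exists>k<n. a k \<noteq> 0)"
  then have z: "a = (\<lambda>k. 0)" using root_support[OF a] by (auto simp: not_le[symmetric])
  obtain ws i where ws: "ws \<in> words n" "i < n" "a = word_act n M ws (simple_root i)"
    using a unfolding roots_def by blast
  have "simple_root i = word_act n M (rev ws) a" using word_act_rev[OF E ws(1)] ws(3) by simp
  also have "\<dots> = (\<lambda>k. 0)" using z word_act_zero by simp
  finally show False by (metis simple_root_def zero_neq_one)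
qed

lemma roots_closed:
  assumes "a \<in> roots n M" "ws \<in> words n"
  shows "word_act n M ws a \<in> roots n M"
proof -
  obtain ws' i where "ws' \<in> words n" "i < n" "a = word_act n M ws' (simple_root i)"
    using assms(1) unfolding roots_def by blast
  then show ?thesis unfolding roots_def using assms(2)
    by (intro CollectI exI[of _ "ws @ ws'"] exI[of _ i]) (simp add: word_act_append)
qed

lemma simple_in_roots: "i < n \<Longrightarrow> simple_root i \<in> roots n M"
  unfolding roots_def by (auto intro!: exI[of _ "[]"])

lemma root_dichotomy:
  assumes "a \<in> roots n M"
  shows "a \<in> pos_roots n M \<or> a \<in> neg_roots n M"
proof -
  obtain ws i where ws: "ws \<in> words n" "i < n" "a = word_act n M ws (simple_root i)"
    using assms unfolding roots_def by blast
  show ?thesis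
  proof (cases "cox_length n M ws < cox_length n M (ws @ [i])")
    case True
    then have "nonneg n a" using pos_lemma[OF E ws(1,2)] ws(3) by simp
    then show ?thesis using assms by (simp add: pos_roots_def nonneg_def)
  next
    case False
    then have lt: "cox_length n M (ws @ [i]) < cox_length n M ((ws @ [i]) @ [i])"
      using len_snoc[OF ws(1,2), of M] len_cong[OF cox_eq_snoc_sq[OF ws(2), of M ws]] by auto
    have "nonneg n (word_act n M (ws @ [i]) (simple_root i))"
      using pos_lemma[OF E _ ws(2) lt] ws by simp
    moreover have "word_act n M (ws @ [i]) (simple_root i) = (\<lambda>k. - a k)"
      using ws(3) refl_act_self[OF E ws(2)] word_act_scale[of n M ws "-1"] by (simp add: word_act_append)
    ultimately show ?thesis using assms by (simp add: neg_roots_def nonneg_def)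
  qed
qed

lemma not_pos_neg:
  assumes "a \<in> pos_roots n M" "a \<in> neg_roots n M"
  shows False
proof -
  obtain k where k: "k < n" "a k \<noteq> 0" using root_nz[of a] assms(1) by (auto simp: pos_roots_def)
  have "0 \<le> a k" "a k \<le> 0" using assms k(1) by (auto simp: pos_roots_def neg_roots_def)
  then show False using k(2) by simp
qed

lemma Pset_pos:
  assumes "a \<in> Pset n M i" "i < n"
  shows "\<exists>K>0. a = (\<lambda>k. K * simple_root i k)"
proof -
  obtain K where K: "a = (\<lambda>k. K * simple_root i k)" and a: "a \<in> pos_roots n M"
    using assms(1) unfolding Pset_def by blast
  have "0 \<le> a i" using a assms(2) by (simp add: pos_roots_def)
  then have "0 \<le> K" using K by (simp add: simple_root_def)
  moreover have "K \<noteq> 0" using root_nz[of a] a K by (auto simp: pos_roots_def)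
  ultimately show ?thesis using K by (intro exI[of _ K]) simp
qed

lemma refl_pos:
  assumes "a \<in> pos_roots n M" "a \<notin> Pset n M i" "i < n"
  shows "refl_act n M i a \<in> pos_roots n M \<and> refl_act n M i a \<notin> Pset n M i"
proof -
  have ar: "a \<in> roots n M" using assms(1) by (simp add: pos_roots_def)
  obtain k where k: "k < n" "k \<noteq> i" "a k \<noteq> 0"
  proof (rule ccontr)
    assume "\<not> thesis"
    then have "\<forall>k<n. k \<noteq> i \<longrightarrow> a k = 0" using that by blast
    then have "a = (\<lambda>k. a i * simple_root i k)"
      using root_support[OF ar] by (intro ext) (metis mult.right_neutral mult_zero_right not_le simple_root_def)
    then show False using assms(1,2) unfolding Pset_def by blast
  qed
  have ak: "a k > 0" using k assms(1) by (auto simp: pos_roots_def order_le_less)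
  have b: "refl_act n M i a k = a k" using k by (simp add: refl_act_def)
  have br: "refl_act n M i a \<in> roots n M" using roots_closed[OF ar, of "[i]"] assms(3) by simp
  have "refl_act n M i a \<notin> neg_roots n M" using b ak k by (auto simp: neg_roots_def)
  then have "refl_act n M i a \<in> pos_roots n M" using root_dichotomy[OF br] by blast
  moreover have "refl_act n M i a \<notin> Pset n M i" using b ak k by (auto simp: Pset_def simple_root_def)
  ultimately show ?thesis by blast
qed

lemma inv_set_snoc:
  assumes vs: "vs \<in> words n" and i: "i < n" and lt: "cox_length n M vs < cox_length n M (vs @ [i])"
  shows "inv_set n M (vs @ [i]) = Pset n M i \<union> refl_act n M i ` inv_set n M vs"
    and "Pset n M i \<inter> refl_act n M i ` inv_set n M vs = {}"
proof -
  have nn: "nonneg n (word_act n M vs (simple_root i))" using pos_lemma[OF E vs i lt] .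
  have inv: "refl_act n M i (refl_act n M i a) = a" for a using refl_act_invol[of i n M a, OF i egcm_diag[OF E i]] .
  have notP: "b \<notin> Pset n M i" if b: "b \<in> inv_set n M vs" for b
  proof
    assume "b \<in> Pset n M i"
    then obtain K where K: "K > 0" "b = (\<lambda>k. K * simple_root i k)" using Pset_pos i by blast
    have "word_act n M vs b = (\<lambda>k. K * word_act n M vs (simple_root i) k)" using K(2) word_act_scale by simp
    then have "word_act n M vs b \<in> pos_roots n M"
      using b nn K(1) by (auto simp: inv_set_def neg_roots_def pos_roots_def nonneg_def)
    then show False using b not_pos_neg by (auto simp: inv_set_def)
  qed
  show "Pset n M i \<inter> refl_act n M i ` inv_set n M vs = {}"
    using refl_pos notP i by (auto simp: inv_set_def)
  show "inv_set n M (vs @ [i]) = Pset n M i \<union> refl_act n M i ` inv_set n M vs"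
  proof (intro equalityI subsetI)
    fix a assume a: "a \<in> inv_set n M (vs @ [i])"
    show "a \<in> Pset n M i \<union> refl_act n M i ` inv_set n M vs"
    proof (cases "a \<in> Pset n M i")
      case False
      have "a \<in> pos_roots n M" using a by (simp add: inv_set_def)
      then have "refl_act n M i a \<in> pos_roots n M" using refl_pos False i by blast
      then have "refl_act n M i a \<in> inv_set n M vs" using a by (simp add: inv_set_def word_act_append)
      then show ?thesis using inv[of a] by (metis UnI2 image_eqI)
    qed simp
  next
    fix a assume a: "a \<in> Pset n M i \<union> refl_act n M i ` inv_set n M vs"
    then show "a \<in> inv_set n M (vs @ [i])"
    proof
      assume aP: "a \<in> Pset n M i"
      then obtain K where K: "K > 0" "a = (\<lambda>k. K * simple_root i k)" using Pset_pos i by blast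
      have "word_act n M (vs @ [i]) a = word_act n M vs (\<lambda>k. (- K) * simple_root i k)"
        using K(2) refl_act_scale[of n M i K] refl_act_self[OF E i] by (simp add: word_act_append)
      also have "\<dots> = (\<lambda>k. (- K) * word_act n M vs (simple_root i) k)" by (rule word_act_scale)
      finally have e: "word_act n M (vs @ [i]) a = (\<lambda>k. (- K) * word_act n M vs (simple_root i) k)" .
      have ar: "a \<in> roots n M" using aP by (simp add: Pset_def pos_roots_def)
      have "word_act n M (vs @ [i]) a \<in> roots n M" using roots_closed[OF ar] vs i by simp
      then have "word_act n M (vs @ [i]) a \<in> neg_roots n M"
        using e nn K(1) by (auto simp: neg_roots_def nonneg_def mult_le_0_iff)
      then show ?thesis using aP by (simp add: inv_set_def Pset_def)
    next
      assume "a \<in> refl_act n M i ` inv_set n M vs"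
      then obtain b where b: "b \<in> inv_set n M vs" "a = refl_act n M i b" by blast
      have "a \<in> pos_roots n M" using refl_pos[of b i] b notP i by (auto simp: inv_set_def)
      moreover have "word_act n M (vs @ [i]) a = word_act n M vs b" using b(2) inv by (simp add: word_act_append)
      ultimately show ?thesis using b(1) by (simp add: inv_set_def)
    qed
  qed
qed

lemma count_inv:
  assumes "vs \<in> words n" "length vs = cox_length n M vs"
  shows "(finite (inv_set n M vs) \<longleftrightarrow> (\<forall>x\<in>set vs. finite (Pset n M x))) \<and>
         (finite (inv_set n M vs) \<longrightarrow> card (inv_set n M vs) = sum_list (map (\<lambda>x. card (Pset n M x)) vs))"
  using assms
proof (induction vs rule: rev_induct)
  case Nil
  have "inv_set n M [] = {}" using not_pos_neg by (auto simp: inv_set_def)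
  then show ?case by simp
next
  case (snoc i vs)
  have vs: "vs \<in> words n" "i < n" using snoc.prems by auto
  have l1: "cox_length n M vs \<le> length vs" using len_le_length[OF vs(1)] .
  have l2: "cox_length n M (vs @ [i]) \<le> cox_length n M vs + 1"
    using len_append_le[of vs n "[i]" M] vs by simp
  have red: "length vs = cox_length n M vs" using l1 l2 snoc.prems(2) by simp
  have lt: "cox_length n M vs < cox_length n M (vs @ [i])" using red snoc.prems(2) by simp
  note IH = snoc.IH[OF vs(1) red]
  note eq = inv_set_snoc[OF vs(1,2) lt]
  have inj: "inj_on (refl_act n M i) (inv_set n M vs)"
    by (rule inj_on_inverseI[where g = "refl_act n M i"]) (rule refl_act_invol[of i n M, OF vs(2) egcm_diag[OF E vs(2)]])
  have fin: "finite (inv_set n M (vs @ [i])) \<longleftrightarrow> finite (Pset n M i) \<and> finite (inv_set n M vs)"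
    unfolding eq(1) using finite_image_iff[OF inj] by simp
  show ?case
  proof
    show "finite (inv_set n M (vs @ [i])) = (\<forall>x\<in>set (vs @ [i]). finite (Pset n M x))"
      using fin IH by auto
    show "finite (inv_set n M (vs @ [i])) \<longrightarrow> card (inv_set n M (vs @ [i])) = sum_list (map (\<lambda>x. card (Pset n M x)) (vs @ [i]))"
    proof
      assume f: "finite (inv_set n M (vs @ [i]))"
      then have f2: "finite (Pset n M i)" "finite (inv_set n M vs)" using fin by auto
      have "card (inv_set n M (vs @ [i])) = card (Pset n M i) + card (refl_act n M i ` inv_set n M vs)"
        unfolding eq(1) using f2 eq(2) by (simp add: card_Un_disjoint)
      also have "\<dots> = card (Pset n M i) + card (inv_set n M vs)" using card_image[OF inj] by simp
      finally show "card (inv_set n M (vs @ [i])) = sum_list (map (\<lambda>x. card (Pset n M x)) (vs @ [i]))"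
        using IH f2 by simp
    qed
  qed
qed

end

lemma odd_adj_sym: "odd_adj n M i j \<Longrightarrow> odd_adj n M j i"
  unfolding odd_adj_def using cox_m_sym by metis

lemma odd_transfer:
  assumes E: "egcm n M" and oa: "odd_adj n M i j"
  shows "\<exists>u\<in>words n. \<exists>K>0. word_act n M u (simple_root i) = (\<lambda>k. K * simple_root j k)"
proof -
  obtain m where ij: "i < n" "j < n" "i \<noteq> j" and cm: "cox_m M i j = enat m" and om: "odd m"
    using oa unfolding odd_adj_def by blast
  have m2: "2 \<le> m" using cox_m_fin[OF E ij cm] by simp
  then have mz: "M i j \<noteq> 0" using m2_of_zero[OF E ij cm] om by auto
  note lt = neg_of_nz[OF E ij mz]
  interpret fin_dih "sqrt (M i j * M j i)" m
    using c_fin[OF E ij cm] by unfold_locales auto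
  obtain h where h: "m = 2 * h + 1" using om oddE by blast
  let ?c = "sqrt (M i j * M j i)"
  have c0: "?c > 0" using lt by (simp add: mult_neg_neg)
  have "word_act n M (altw i j (2 * h)) (simple_root i) = vec i j (pseq ?c (2 * h + 1)) (- M j i / ?c * pseq ?c (2 * h))"
    using altw_act[OF E ij lt, of h] by blast
  also have "\<dots> = vec i j 0 (- M j i / ?c)"
    using p_m p_m1 h by simp
  also have "\<dots> = (\<lambda>k. (- M j i / ?c) * simple_root j k)"
    using ij by (auto simp: vec_def simple_root_def)
  finally have e: "word_act n M (altw i j (2 * h)) (simple_root i) = (\<lambda>k. (- M j i / ?c) * simple_root j k)" .
  have K: "- M j i / ?c > 0" using lt c0 by (simp add: divide_neg_pos)
  have "altw i j (2 * h) \<in> words n" using words_ij[OF set_altw ij(1,2)] .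
  then show ?thesis using e K by blast
qed

lemma card_eq_inj:
  assumes "inj_on f A" "f ` A \<subseteq> B" "inj_on g B" "g ` B \<subseteq> A"
  shows "card A = card B"
proof (cases "finite B")
  case True
  then have fA: "finite A" using assms(1,2) by (meson finite_imageD finite_subset)
  show ?thesis using card_inj_on_le[OF assms(1,2) True] card_inj_on_le[OF assms(3,4) fA] by simp
next
  case False
  then have "infinite A" using assms(3,4) by (meson finite_imageD finite_subset)
  then show ?thesis using False by simp
qed

context
  fixes n M
  assumes E: "egcm n M"
begin

lemma Pset_map:
  assumes "odd_adj n M i j"
  shows "\<exists>f. inj_on f (Pset n M i) \<and> f ` Pset n M i \<subseteq> Pset n M j"
proof -
  obtain u K where u: "u \<in> words n" "K > 0" "word_act n M u (simple_root i) = (\<lambda>k. K * simple_root j k)"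
    using odd_transfer[OF E assms] by blast
  have ij: "i < n" "j < n" using assms by (auto simp: odd_adj_def)
  have inj: "inj_on (word_act n M u) (Pset n M i)"
    by (rule inj_on_inverseI[where g = "word_act n M (rev u)"]) (rule word_act_rev[OF E u(1)])
  have "word_act n M u a \<in> Pset n M j" if a: "a \<in> Pset n M i" for a
  proof -
    obtain t where t: "t > 0" "a = (\<lambda>k. t * simple_root i k)" using Pset_pos[OF E a ij(1)] by blast
    have e: "word_act n M u a = (\<lambda>k. (t * K) * simple_root j k)"
      using t(2) u(3) word_act_scale[of n M u t "simple_root i"] by (simp add: mult.assoc)
    have "word_act n M u a \<in> roots n M"
      using roots_closed[OF E _ u(1)] a by (auto simp: Pset_def pos_roots_def)
    moreover have "\<forall>k<n. 0 \<le> word_act n M u a k" using e t(1) u(2) by (simp add: simple_root_def)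
    ultimately show ?thesis using e by (auto simp: Pset_def pos_roots_def)
  qed
  then show ?thesis using inj by blast
qed

lemma Pset_card_adj:
  assumes "odd_adj n M i j"
  shows "card (Pset n M i) = card (Pset n M j)"
  using Pset_map[OF assms] Pset_map[OF odd_adj_sym[OF assms]] card_eq_inj by metis

lemma Pset_card_path: "oa_path n M p \<Longrightarrow> card (Pset n M (hd p)) = card (Pset n M (last p))"
proof (induction p)
  case Nil then show ?case by (simp add: oa_path_def)
next
  case (Cons a p)
  show ?case
  proof (cases "p = []")
    case True then show ?thesis by simp
  next
    case False
    have adj: "odd_adj n M a (hd p)"
      using Cons.prems False unfolding oa_path_def by (metis hd_conv_nth length_Cons length_greater_0_conv nth_Cons_0 nth_Cons_Suc Suc_less_eq)
    have "oa_path n M p"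
      using Cons.prems False unfolding oa_path_def by auto
    then show ?thesis using Cons.IH Pset_card_adj[OF adj] False by simp
  qed
qed

lemma f_node_comp:
  assumes "x < n"
  shows "f_node n M x \<in> f_comp n M ` oa_components n M"
proof -
  define C where "C = {y. y < n \<and> oa_joined n M x y}"
  have C: "C \<in> oa_components n M" using assms unfolding C_def oa_components_def by blast
  have "x \<in> C" using assms unfolding C_def oa_joined_def
    by (intro CollectI conjI exI[of _ "[x]"]) (auto simp: oa_path_def)
  then have "(SOME y. y \<in> C) \<in> C" by (rule someI)
  then have "oa_joined n M x (SOME y. y \<in> C)" unfolding C_def by blast
  then have "f_node n M x = f_node n M (SOME y. y \<in> C)"
    unfolding oa_joined_def f_node_Pset using Pset_card_path by metis
  then show ?thesis using C unfolding f_comp_def by blast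
qed

end

lemma finite_comps: "finite (oa_components n M)"
proof -
  have "oa_components n M = (\<lambda>x. {y. y < n \<and> oa_joined n M x y}) ` {..<n}"
    unfolding oa_components_def by auto
  then show ?thesis by simp
qed

lemma sum_list_bounds:
  assumes "\<forall>x\<in>set vs. a \<le> g x \<and> g x \<le> b"
  shows "a * length vs \<le> sum_list (map g vs) \<and> sum_list (map g vs) \<le> (b :: nat) * length vs"
  using assms by (induction vs) (auto simp: add_mono)

theorem proposition4p9:
  fixes n :: nat and M :: "nat \<Rightarrow> nat \<Rightarrow> real"
  assumes "egcm n M" and "unital_oa_cyclic n M"
    and "ws \<in> words n"
  shows "Min (f_comp n M ` oa_components n M) * cox_length n M ws \<le> card (inv_set n M ws)
       \<and> card (inv_set n M ws) \<le> Max (f_comp n M ` oa_components n M) * cox_length n M ws"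
proof -
  note E = assms(1)
  let ?S = "f_comp n M ` oa_components n M"
  have fS: "finite ?S" using finite_comps by simp
  obtain vs where vs: "vs \<in> words n" "length vs = cox_length n M ws" "cox_eq n M ws vs"
    using len_ex[OF assms(3)] by blast
  have inv: "inv_set n M ws = inv_set n M vs"
    unfolding inv_set_def using cox_eq_act[OF E vs(3)] by simp
  have lv: "length vs = cox_length n M vs" using vs len_cong by metis
  note cnt = count_inv[OF E vs(1) lv]
  have bnd: "\<forall>x\<in>set vs. Min ?S \<le> card (Pset n M x) \<and> card (Pset n M x) \<le> Max ?S"
  proof
    fix x assume "x \<in> set vs"
    then have "x < n" using vs(1) by (auto simp: words_def)
    then have "card (Pset n M x) \<in> ?S" using f_node_comp[OF E] f_node_Pset by metis
    then show "Min ?S \<le> card (Pset n M x) \<and> card (Pset n M x) \<le> Max ?S" using fS by simp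
  qed
  show ?thesis
  proof (cases "finite (inv_set n M vs)")
    case True
    then have "card (inv_set n M vs) = sum_list (map (\<lambda>x. card (Pset n M x)) vs)" using cnt by blast
    then show ?thesis using sum_list_bounds[OF bnd] inv vs(2) by (simp add: mult.commute)
  next
    case False
    then obtain x where x: "x \<in> set vs" "infinite (Pset n M x)" using cnt by blast
    then have "Min ?S = 0" using bnd by fastforce
    then show ?thesis using False inv by simp
  qed
qed

end
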